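(* Let $n$ be a positive integer with $\gcd(n,5)=\gcd(n,2)=1$. Then the families of $2$-constacyclic and $4$-constacyclic codes of length $n$ over $\mathbb{F}_5$ are monomially equivalent.
   Context: For $c\in\mathbb{F}_q^*$, a linear code $C\subseteq\mathbb{F}_q^n$ is called $c$-constacyclic if for every codeword $(c_0,c_1,\ldots,c_{n-1})\in C$ we also have $(c\, c_{n-1},c_0,\ldots,c_{n-2})\in C$. An isometry of linear codes is an $\mathbb{F}_q$-linear isomorphism preserving Hamming distance (equivalently, a map given by a monomial matrix). For $a,b\in\mathbb{F}_q^*$, the families of $a$-constacyclic and $b$-constacyclic codes of length $n$ over $\mathbb{F}_q$ are called monomially equivalent if there is a one-to-one correspondence between the set of $a$-constacyclic codes and the set of $b$-constacyclic codes of length $n$ given by an isometry of linear codes. *)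

theory Defs
  imports "HOL-Combinatorics.Permutations"
begin

definition words :: "nat \<Rightarrow> (nat \<Rightarrow> 'a::field) set" where
  "words n = {v. \<forall>i\<ge>n. v i = 0}"

definition linear_code :: "nat \<Rightarrow> (nat \<Rightarrow> 'a::field) set \<Rightarrow> bool" where
  "linear_code n C \<longleftrightarrow> C \<subseteq> words n \<and> (\<lambda>_. 0) \<in> C
     \<and> (\<forall>u\<in>C. \<forall>v\<in>C. (\<lambda>i. u i + v i) \<in> C)
     \<and> (\<forall>a. \<forall>v\<in>C. (\<lambda>i. a * v i) \<in> C)"

definition const_shift :: "nat \<Rightarrow> 'a::field \<Rightarrow> (nat \<Rightarrow> 'a) \<Rightarrow> (nat \<Rightarrow> 'a)" where
  "const_shift n c v = (\<lambda>i. if i = 0 then c * v (n - 1) else if i < n then v (i - 1) else 0)"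

definition constacyclic :: "nat \<Rightarrow> 'a::field \<Rightarrow> (nat \<Rightarrow> 'a) set \<Rightarrow> bool" where
  "constacyclic n c C \<longleftrightarrow> linear_code n C \<and> (\<forall>v\<in>C. const_shift n c v \<in> C)"

definition constacyclic_codes :: "nat \<Rightarrow> 'a::field \<Rightarrow> (nat \<Rightarrow> 'a) set set" where
  "constacyclic_codes n c = {C. constacyclic n c C}"

definition monomial_map :: "nat \<Rightarrow> ((nat \<Rightarrow> 'a::field) \<Rightarrow> (nat \<Rightarrow> 'a)) \<Rightarrow> bool" where
  "monomial_map n \<phi> \<longleftrightarrow> (\<exists>\<sigma> d. \<sigma> permutes {..<n} \<and> (\<forall>i<n. d i \<noteq> 0) \<and>
      (\<forall>v. \<phi> v = (\<lambda>i. if i < n then d i * v (\<sigma> i) else 0)))"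

definition monomially_equivalent :: "nat \<Rightarrow> 'a::field \<Rightarrow> 'a \<Rightarrow> bool" where
  "monomially_equivalent n a b \<longleftrightarrow> a \<noteq> 0 \<and> b \<noteq> 0 \<and>
     (\<exists>\<phi>. monomial_map n \<phi> \<and>
        bij_betw (\<lambda>C. \<phi> ` C) (constacyclic_codes n a) (constacyclic_codes n b))"

end

theory Submission
  imports Defs
begin

lemma fermat_ff:
  fixes x :: "'a::field"
  assumes fin: "finite (UNIV::'a set)" and x: "x \<noteq> 0"
  shows "x ^ (card (UNIV::'a set) - 1) = 1"
proof -
  let ?S = "UNIV - {0::'a}"
  have cS: "card ?S = card (UNIV::'a set) - 1" using fin by (simp add: card_Diff_singleton)
  have "prod (\<lambda>y. x * y) ?S = prod id ?S"
  proof (rule prod.reindex_bij_witness[where i="\<lambda>y. y / x" and j="\<lambda>y. x * y"])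
  qed (use x in auto)
  moreover have "prod (\<lambda>y. x * y) ?S = x ^ card ?S * prod id ?S"
    by (simp add: prod.distrib)
  moreover have "prod id ?S \<noteq> 0" using fin by (simp add: prod_zero_iff)
  ultimately show ?thesis using cS by simp
qed

lemma card5_enum:
  assumes "card (UNIV :: 'a set) = 5"
  obtains a b c d e :: 'a where "UNIV = {a,b,c,d,e}" and "distinct [a,b,c,d,e]"
proof -
  from assms have "card (UNIV :: 'a set) = Suc (Suc (Suc (Suc (Suc 0))))" by simp
  then show ?thesis unfolding card_Suc_eq using that by fastforce
qed

lemma two_ne0:
  assumes "card (UNIV :: 'a::field set) = 5"
  shows "(2::'a) \<noteq> 0"
proof
  assume h: "(2::'a) = 0"
  have xx: "\<And>x::'a. x + 1 + 1 = x" using h by (metis add.assoc add.right_neutral one_add_one)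
  obtain a b c d e :: 'a where U: "UNIV = {a,b,c,d,e}" and dist: "distinct [a,b,c,d,e]"
    using card5_enum[OF assms] by blast
  have inU: "\<And>x::'a. x \<in> {a,b,c,d,e}" using U by blast
  define f where "f = (\<lambda>x::'a. x + 1)"
  have "f a \<in> {a,b,c,d,e}" "f b \<in> {a,b,c,d,e}" "f c \<in> {a,b,c,d,e}" "f d \<in> {a,b,c,d,e}" "f e \<in> {a,b,c,d,e}"
    using inU by auto
  moreover have "\<And>x. f (f x) = x" "\<And>x. f x \<noteq> x" using xx by (auto simp: f_def)
  ultimately show False using dist by simp metis
qed

definition sc :: "nat \<Rightarrow> 'a::field \<Rightarrow> (nat \<Rightarrow> 'a) \<Rightarrow> (nat \<Rightarrow> 'a)" where
  "sc n l v = (\<lambda>i. if i < n then l ^ i * v i else 0)"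

lemma sc_inv:
  assumes "l \<noteq> 0" "v \<in> words n"
  shows "sc n (inverse l) (sc n l v) = v"
proof
  fix i show "sc n (inverse l) (sc n l v) i = v i"
  proof (cases "i < n")
    case True
    have e: "inverse l ^ i * l ^ i = 1" using assms(1) by (simp add: power_inverse)
    have "inverse l ^ i * (l ^ i * v i) = (inverse l ^ i * l ^ i) * v i" by (simp only: mult.assoc)
    then show ?thesis using True e by (simp add: sc_def)
  next
    case False
    then show ?thesis using assms(2) by (simp add: sc_def words_def)
  qed
qed

lemma sc_linear:
  assumes "linear_code n C"
  shows "linear_code n (sc n l ` C)"
  unfolding linear_code_def
proof (intro conjI ballI allI)
  show "sc n l ` C \<subseteq> words n" by (auto simp: sc_def words_def)
  have "sc n l (\<lambda>_. 0) = (\<lambda>_. 0)" by (auto simp: sc_def)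
  then show "(\<lambda>_. 0) \<in> sc n l ` C" using assms unfolding linear_code_def by (metis image_eqI)
next
  fix u v assume "u \<in> sc n l ` C" "v \<in> sc n l ` C"
  then obtain x y where xy: "x \<in> C" "y \<in> C" "u = sc n l x" "v = sc n l y" by auto
  have "(\<lambda>i. x i + y i) \<in> C" using assms xy unfolding linear_code_def by blast
  moreover have "(\<lambda>i. u i + v i) = sc n l (\<lambda>i. x i + y i)" using xy by (auto simp: sc_def algebra_simps)
  ultimately show "(\<lambda>i. u i + v i) \<in> sc n l ` C" by blast
next
  fix c v assume "v \<in> sc n l ` C"
  then obtain x where xy: "x \<in> C" "v = sc n l x" by auto
  have "(\<lambda>i. c * x i) \<in> C" using assms xy unfolding linear_code_def by blast
  moreover have "(\<lambda>i. c * v i) = sc n l (\<lambda>i. c * x i)" using xy by (auto simp: sc_def algebra_simps)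
  ultimately show "(\<lambda>i. c * v i) \<in> sc n l ` C" by blast
qed

lemma shift_sc:
  assumes "l \<noteq> 0" "l ^ n * b = a" "n > 0"
  shows "const_shift n b (sc n l v) = (\<lambda>i. inverse l * sc n l (const_shift n a v) i)"
proof
  fix i
  show "const_shift n b (sc n l v) i = inverse l * sc n l (const_shift n a v) i"
  proof (cases "i = 0")
    case True
    have ln: "l ^ n = l * l ^ (n - 1)" using assms(3) by (cases n) simp_all
    have ia: "inverse l * a = l ^ (n - 1) * b"
    proof -
      have "inverse l * a = inverse l * (l * l ^ (n - 1) * b)" using assms(2) ln by simp
      also have "\<dots> = (inverse l * l) * (l ^ (n - 1) * b)" by (simp only: mult.assoc)
      also have "\<dots> = l ^ (n - 1) * b" using assms(1) by simp
      finally show ?thesis .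
    qed
    have "const_shift n b (sc n l v) i = b * (l ^ (n - 1) * v (n - 1))"
      using True assms(3) by (simp add: const_shift_def sc_def)
    moreover have "inverse l * sc n l (const_shift n a v) i = (inverse l * a) * v (n - 1)"
      using True assms(3) by (simp add: const_shift_def sc_def mult.assoc)
    ultimately show ?thesis using ia by (metis mult.assoc mult.commute)
  next
    case False
    show ?thesis
    proof (cases "i < n")
      case True
      have li: "l ^ i = l * l ^ (i - 1)" using False by (cases i) simp_all
      have "inverse l * (l ^ i * v (i - 1)) = (inverse l * l) * (l ^ (i - 1) * v (i - 1))"
        using li by (simp only: mult.assoc)
      then have "inverse l * (l ^ i * v (i - 1)) = l ^ (i - 1) * v (i - 1)" using assms(1) by simp
      moreover have "const_shift n b (sc n l v) i = l ^ (i - 1) * v (i - 1)"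
        using False True by (simp add: const_shift_def sc_def less_imp_diff_less)
      moreover have "sc n l (const_shift n a v) i = l ^ i * v (i - 1)"
        using False True by (simp add: const_shift_def sc_def)
      ultimately show ?thesis by (metis mult.assoc)
    next
      case F2: False
      then show ?thesis using False by (simp add: const_shift_def sc_def)
    qed
  qed
qed
lemma sc_consta:
  assumes "constacyclic n a C" "l \<noteq> 0" "l ^ n * b = a" "n > 0"
  shows "constacyclic n b (sc n l ` C)"
  unfolding constacyclic_def
proof (intro conjI ballI)
  have L: "linear_code n C" using assms(1) by (simp add: constacyclic_def)
  show "linear_code n (sc n l ` C)" using sc_linear[OF L] .
  fix v assume "v \<in> sc n l ` C"
  then obtain x where x: "x \<in> C" "v = sc n l x" by auto
  have "const_shift n a x \<in> C" using assms(1) x by (simp add: constacyclic_def)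
  then have "sc n l (const_shift n a x) \<in> sc n l ` C" by blast
  then have "(\<lambda>i. inverse l * sc n l (const_shift n a x) i) \<in> sc n l ` C"
    using sc_linear[OF L] unfolding linear_code_def by blast
  then show "const_shift n b v \<in> sc n l ` C" using shift_sc[OF assms(2-4)] x by simp
qed

lemma sc_mono: "monomial_map n (sc n (l::'a::field)) \<or> l = 0"
proof (cases "l = 0")
  case False
  have "monomial_map n (sc n l)" unfolding monomial_map_def
    by (rule exI[of _ id], rule exI[of _ "\<lambda>i. l ^ i"]) (use False in \<open>auto simp: sc_def permutes_id\<close>)
  then show ?thesis by simp
qed simp

lemma gen_equiv:
  fixes a b l :: "'a::field"
  assumes "a \<noteq> 0" "b \<noteq> 0" "l \<noteq> 0" "l ^ n * b = a" "n > 0"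
  shows "monomially_equivalent n a b"
  unfolding monomially_equivalent_def
proof (intro conjI exI)
  show "a \<noteq> 0" "b \<noteq> 0" by fact+
  show "monomial_map n (sc n l)" using sc_mono[of n l] assms(3) by simp
  have il: "inverse l \<noteq> 0" "inverse l ^ n * a = b" using assms
    by (auto simp: power_inverse field_simps)
  have bk: "(\<lambda>C. sc n (inverse l) ` C) ` (constacyclic_codes n b) \<subseteq> constacyclic_codes n a"
    using sc_consta[OF _ il assms(5)] by (auto simp: constacyclic_codes_def)
  have forw: "(\<lambda>C. sc n l ` C) ` (constacyclic_codes n a) \<subseteq> constacyclic_codes n b"
    using sc_consta[OF _ assms(3,4,5)] by (auto simp: constacyclic_codes_def)
  have w: "C \<subseteq> words n" if "C \<in> constacyclic_codes n c" for C c
    using that by (simp add: constacyclic_codes_def constacyclic_def linear_code_def)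
  have il2: "inverse (inverse l) = l" by simp
  show "bij_betw (\<lambda>C. sc n l ` C) (constacyclic_codes n a) (constacyclic_codes n b)"
  proof (rule bij_betw_byWitness[where f'="\<lambda>C. sc n (inverse l) ` C"])
    show "\<forall>C\<in>constacyclic_codes n a. sc n (inverse l) ` sc n l ` C = C"
    proof
      fix C assume "C \<in> constacyclic_codes n a"
      then have "C \<subseteq> words n" by (rule w)
      then show "sc n (inverse l) ` sc n l ` C = C"
        using sc_inv[OF assms(3)] by (force simp: image_image)
    qed
    show "\<forall>C\<in>constacyclic_codes n b. sc n l ` sc n (inverse l) ` C = C"
    proof
      fix C assume "C \<in> constacyclic_codes n b"
      then have "C \<subseteq> words n" by (rule w)
      then show "sc n l ` sc n (inverse l) ` C = C"
        using sc_inv[OF il(1)] il2 by (force simp: image_image)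
    qed
  qed (use forw bk in auto)
qed

lemma final:
  fixes n :: nat
  assumes c5: "card (UNIV :: 'a::field set) = 5"
    and "n > 0" and "coprime n 2"
  shows "((inverse 2 :: 'a) ^ n) ^ n * 4 = 2"
proof -
  have fin: "finite (UNIV :: 'a set)" using c5 by (metis card.infinite zero_neq_numeral)
  have t: "(2::'a) \<noteq> 0" using two_ne0[OF c5] .
  have "odd n" using assms(3) by (metis coprime_right_2_iff_odd)
  then obtain m where m: "n = 2*m+1" by (metis oddE)
  have nn: "n * n = 4 * (m*m+m) + 1" using m by (simp add: algebra_simps)
  have f: "(inverse 2 :: 'a) ^ 4 = 1" using fermat_ff[OF fin, of "inverse 2"] t c5 by simp
  have "((inverse 2 :: 'a) ^ n) ^ n = (inverse 2) ^ (n * n)" by (simp add: power_mult)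
  also have "\<dots> = ((inverse 2) ^ 4) ^ (m*m+m) * inverse 2" unfolding nn power_add power_mult by simp
  also have "\<dots> = inverse 2" using f by simp
  finally have e: "((inverse 2 :: 'a) ^ n) ^ n = inverse 2" .
  have "(4::'a) = 2 * 2" by simp
  then show ?thesis using t e by (simp add: field_simps)
qed
theorem proposition4p2:
  fixes n :: nat
  assumes "card (UNIV :: 'a::field set) = 5"
    and "n > 0" and "coprime n 5" and "coprime n 2"
  shows "monomially_equivalent n (2::'a) 4"
proof -
  have t: "(2::'a) \<noteq> 0" using two_ne0[OF assms(1)] .
  have f: "(4::'a) \<noteq> 0"
  proof
    assume z: "(4::'a) = 0"
    have "(4::'a) = 2 * 2" by simp
    then have "(2::'a) * 2 = 0" using z by simp
    then show False using t by (metis mult_eq_0_iff)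
  qed
  show ?thesis
    by (rule gen_equiv[where l="(inverse 2 :: 'a) ^ n"]) (use t f final[OF assms(1,2,4)] assms(2) in auto)
qed

end
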